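(* Let $n\ge2$, $\rho>0$ and $m\in\mathbb R$. Then $$M\Big(\sum_{k=0}^{n-1}\frac1{k+1}\binom{n-1}{k}(z\rho^{1-m})^k\Big)=\frac1n\rho^{(1-m)(n-1)}\prod_{\substack{1\le k\le n-1:\\ \rho^{m-1}2\sin(\pi k/n)\ge1}}\rho^{m-1}\,2\sin\frac{\pi k}{n}.$$
   Context: For a function $h$ continuous and nonvanishing almost everywhere on the unit circle, $M(h)=\exp\big(\frac1{2\pi}\int_0^{2\pi}\log|h(e^{i\theta})|\,d\theta\big)$; here $M$ is applied to the polynomial in the variable $z$. *)

theory Defs
  imports "HOL-Analysis.Analysis"
begin

definition mahler_measure :: "(complex \<Rightarrow> complex) \<Rightarrow> real" where
  "mahler_measure h =
     exp (1 / (2 * pi) * integral {0..2*pi} (\<lambda>\<theta>. ln (cmod (h (cis \<theta>)))))"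

end

theory Submission
  imports Defs
begin

lemma cis_pow_int:
  assumes "j \<ge> 1"
  shows "((\<lambda>t. cis t ^ j) has_integral 0) {0..2*pi}"
proof -
  define F where "F = (\<lambda>z::complex. exp (\<i> * of_nat j * z) / (\<i> * of_nat j))"
  have "((\<lambda>t. cis t ^ j) has_integral (F (of_real (2*pi)) - F (of_real 0))) {0..2*pi}"
  proof (rule fundamental_theorem_of_calculus)
    fix t assume "t \<in> {0..2*pi}"
    have "(F has_field_derivative exp (\<i> * of_nat j * of_real t)) (at (of_real t))"
      unfolding F_def using assms
      by (auto intro!: derivative_eq_intros simp: field_simps)
    from has_vector_derivative_real_field[OF this]
    have "((\<lambda>x. F (of_real x)) has_vector_derivative exp (\<i> * of_nat j * of_real t)) (at t within {0..2*pi})" .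
    moreover have "exp (\<i> * of_nat j * of_real t) = cis t ^ j"
    proof -
      have "cis t ^ j = exp (of_nat j * (\<i> * of_real t))" by (simp only: cis_conv_exp exp_of_nat_mult)
      then show ?thesis by (metis mult.assoc mult.commute)
    qed
    ultimately show "((\<lambda>x. F (of_real x)) has_vector_derivative cis t ^ j) (at t within {0..2*pi})" by simp
  qed simp
  moreover have "F (of_real (2*pi)) - F (of_real 0) = 0"
  proof -
    have "exp (\<i> * of_nat j * of_real (2*pi)) = 1"
    proof -
      have e: "\<i> * of_nat j * of_real (2*pi) = of_nat j * (2 * of_real pi * \<i>)" by simp
      show ?thesis by (simp only: e exp_of_nat_mult exp_two_pi_i power_one)
    qed
    then show ?thesis by (simp add: F_def)
  qed
  ultimately show ?thesis by simp
qed

lemma jensen_small: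
  assumes b: "cmod b < 1"
  shows "((\<lambda>t. ln (cmod (1 - b * cis t))) has_integral 0) {0..2*pi}"
proof -
  define f where "f = (\<lambda>i t. (- (b^i) / of_nat i) * cis t ^ i)"
  have fi: "(f i has_integral 0) {0..2*pi}" for i
  proof (cases "i = 0")
    case True then show ?thesis by (simp add: f_def)
  next
    case False
    have "((\<lambda>t. (- (b^i) / of_nat i) * cis t ^ i) has_integral (- (b^i) / of_nat i) * 0) {0..2*pi}"
      by (intro has_integral_mult_right cis_pow_int) (use False in auto)
    then show ?thesis by (simp add: f_def)
  qed
  have sums: "(\<lambda>i. f i t) sums Ln (1 - b * cis t)" for t
  proof -
    have "cmod (- (b * cis t)) < 1" using b by (simp add: norm_mult)
    from Ln_series'[OF this] show ?thesis by (simp add: f_def power_mult_distrib)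
  qed
  have u: "uniform_limit {0..2*pi} (\<lambda>n t. \<Sum>i<n. f i t) (\<lambda>t. suminf (\<lambda>i. f i t)) sequentially"
  proof (rule Weierstrass_m_test)
    show "summable (\<lambda>i. cmod b ^ i)" using b by (simp add: summable_geometric)
    fix i t
    show "cmod (f i t) \<le> cmod b ^ i"
    proof (cases "i = 0")
      case True then show ?thesis by (simp add: f_def)
    next
      case False
      have "cmod (f i t) = cmod b ^ i / real i" by (simp add: f_def norm_mult norm_divide norm_power)
      also have "\<dots> \<le> cmod b ^ i" using False by (simp add: divide_le_eq mult_le_cancel_left1)
      finally show ?thesis .
    qed
  qed
  have cont: "continuous_on {0..2*pi} (\<lambda>t. \<Sum>i<n. f i t)" for n
    unfolding f_def by (intro continuous_intros)
  obtain I J where I: "\<And>n. ((\<lambda>t. \<Sum>i<n. f i t) has_integral I n) {0..2*pi}"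
    and J: "((\<lambda>t. suminf (\<lambda>i. f i t)) has_integral J) {0..2*pi}"
    and IJ: "I \<longlonglongrightarrow> J"
    by (rule uniform_limit_integral[OF u cont]) auto
  have I0: "I n = 0" for n
  proof -
    have "((\<lambda>t. \<Sum>i<n. f i t) has_integral (\<Sum>i<n. 0)) {0..2*pi}"
      by (intro has_integral_sum fi) auto
    then show ?thesis using I[of n] by (simp add: has_integral_unique)
  qed
  have "I = (\<lambda>n. 0)" using I0 by (rule ext)
  with IJ have "J = 0" by (metis LIMSEQ_unique tendsto_const)
  moreover have "suminf (\<lambda>i. f i t) = Ln (1 - b * cis t)" for t
    using sums[of t] by (simp add: sums_iff)
  ultimately have "((\<lambda>t. Ln (1 - b * cis t)) has_integral 0) {0..2*pi}" using J by simp
  from has_integral_Re[OF this] have "((\<lambda>t. Re (Ln (1 - b * cis t))) has_integral 0) {0..2*pi}" by simp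
  moreover have "1 - b * cis t \<noteq> 0" for t
  proof
    assume "1 - b * cis t = 0"
    then have "cmod (b * cis t) = 1" by (metis eq_iff_diff_eq_0 norm_one)
    with b show False by (simp add: norm_mult)
  qed
  ultimately show ?thesis by simp
qed

lemma countable_negligible:
  fixes S :: "real set"
  assumes "countable S" shows "negligible S"
proof -
  have "S = \<Union>((\<lambda>x. {x}) ` S)" by auto
  also have "negligible \<dots>"
    by (rule negligible_countable_Union) (use assms in auto)
  finally show ?thesis .
qed

lemma countable_cis_eq: "countable {t. cis t = z}"
proof (cases "\<exists>t0. cis t0 = z")
  case False then show ?thesis by auto
next
  case True
  then obtain t0 where t0: "cis t0 = z" by blast
  have "{t. cis t = z} \<subseteq> range (\<lambda>n::int. t0 + 2 * real_of_int n * pi)"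
  proof
    fix t assume "t \<in> {t. cis t = z}"
    then have "exp (\<i> * of_real t) = exp (\<i> * of_real t0)" using t0 by (simp add: cis_conv_exp)
    then obtain n :: int where n: "\<i> * of_real t = \<i> * of_real t0 + (of_int (2 * n) * pi) * \<i>"
      by (auto simp: exp_eq)
    have "t = Im (\<i> * of_real t)" by simp
    also have "\<dots> = t0 + 2 * real_of_int n * pi" by (subst n) simp
    finally show "t \<in> range (\<lambda>n::int. t0 + 2 * real_of_int n * pi)" by blast
  qed
  then show ?thesis by (rule countable_subset) simp
qed

lemma jensen_in:
  assumes a: "cmod a < 1"
  shows "((\<lambda>t. ln (cmod (cis t - a))) has_integral 0) {0..2*pi}"
proof -
  have "cmod (cis t - a) = cmod (1 - cnj a * cis t)" for t
  proof -
    have "cis t - a = cis t * (1 - a * cis (-t))" by (simp add: algebra_simps cis_mult)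
    then have "cmod (cis t - a) = cmod (1 - a * cis (-t))" by (simp add: norm_mult)
    also have "\<dots> = cmod (cnj (1 - a * cis (-t)))" by (rule complex_mod_cnj[symmetric])
    also have "cnj (1 - a * cis (-t)) = 1 - cnj a * cis t" by (simp add: cis_cnj)
    finally show ?thesis .
  qed
  with jensen_small[of "cnj a"] a show ?thesis by simp
qed

lemma jensen_out:
  assumes a: "cmod a > 1"
  shows "((\<lambda>t. ln (cmod (cis t - a))) has_integral (2*pi*ln (cmod a))) {0..2*pi}"
proof -
  have a0: "a \<noteq> 0" using a by auto
  have ia: "cmod (inverse a) < 1" using a by (simp add: norm_inverse inverse_less_1_iff)
  have eq: "ln (cmod (cis t - a)) = ln (cmod a) + ln (cmod (1 - inverse a * cis t))" for t
  proof -
    have "cis t - a = - a * (1 - inverse a * cis t)" using a0 by (simp add: algebra_simps)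
    then have "cmod (cis t - a) = cmod a * cmod (1 - inverse a * cis t)" by (simp add: norm_mult)
    moreover have "1 - inverse a * cis t \<noteq> 0"
    proof
      assume "1 - inverse a * cis t = 0"
      then have "cmod (inverse a * cis t) = 1" by (metis eq_iff_diff_eq_0 norm_one)
      with ia show False by (simp add: norm_mult)
    qed
    ultimately show ?thesis using a0 by (simp add: ln_mult)
  qed
  have c: "((\<lambda>t. ln (cmod a)) has_integral (2*pi*ln (cmod a))) {0..2*pi}"
    using has_integral_const_real[of "ln (cmod a)" 0 "2*pi"] by simp
  have "((\<lambda>t. ln (cmod a) + ln (cmod (1 - inverse a * cis t))) has_integral (2*pi*ln (cmod a) + 0)) {0..2*pi}"
    by (intro has_integral_add c jensen_small ia)
  then show ?thesis by (simp add: eq mult_ac)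
qed

lemma jensen_unit:
  assumes a: "cmod a = 1"
  shows "((\<lambda>t. ln (cmod (cis t - a))) has_integral 0) {0..2*pi}"
proof -
  define E where "E = {t. cis t = a}"
  have negE: "negligible E" unfolding E_def by (intro countable_negligible countable_cis_eq)
  define S where "S = {0..2*pi} - E"
  define r where "r = (\<lambda>k::nat. 1 - inverse (real (Suc k)) / 2)"
  have r0: "1/2 \<le> r k" and r1: "r k < 1" for k
    by (auto simp: r_def field_simps)
  have rpos: "0 < r k" for k using r0[of k] by linarith
  have rmono: "r k \<le> r (Suc k)" for k
    by (auto simp: r_def field_simps)
  have rlim: "r \<longlonglongrightarrow> 1"
    unfolding r_def using tendsto_diff[OF tendsto_const tendsto_divide[OF LIMSEQ_inverse_real_of_nat tendsto_const, of 2]]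
    by simp
  define w where "w = (\<lambda>t. cnj a * cis t)"
  have aa: "a * cnj a = 1" using a by (simp add: complex_mult_cnj cmod_power2[symmetric])
  have w1: "Re (w t) ^ 2 + Im (w t) ^ 2 = 1" for t
  proof -
    have n: "cmod (w t) = 1" unfolding w_def by (simp add: norm_mult a)
    show ?thesis by (metis cmod_power2 n power_one)
  qed
  have key: "cmod (cis t - of_real s * a) ^ 2 = 1 - 2 * s * Re (w t) + s^2" for s t
  proof -
    have "cis t - of_real s * a = a * (w t - of_real s)" using aa
      by (simp add: w_def algebra_simps)
    then have "cmod (cis t - of_real s * a) = cmod (w t - of_real s)" by (simp add: norm_mult a)
    then have "cmod (cis t - of_real s * a) ^ 2 = (Re (w t) - s)^2 + Im (w t)^2"
      by (simp add: cmod_power2)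
    also have "\<dots> = 1 - 2 * s * Re (w t) + s^2" using w1[of t] by (simp add: power2_eq_square algebra_simps)
    finally show ?thesis .
  qed
  have Rew: "Re (w t) \<le> 1" for t
  proof -
    have "Re (w t) ^ 2 \<le> 1" using w1[of t] by (smt (verit) zero_le_power2)
    then show ?thesis using power2_le_imp_le[of "Re (w t)" 1] by simp
  qed
  define h where "h = (\<lambda>s t. 1/s + s - 2 * Re (w t))"
  have hpos: "h (r k) t > 0" for k t
  proof -
    have "1/r k + r k - 2 = (1 - r k)^2 / r k" using rpos[of k] by (simp add: field_simps power2_eq_square)
    also have "\<dots> > 0" using rpos[of k] r1[of k] by simp
    finally show ?thesis using Rew[of t] by (simp add: h_def)
  qed
  define f where "f = (\<lambda>k t. ln (h (r k) t) / 2)"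
  have feq: "f k t = ln (cmod (cis t - of_real (r k) * a)) - ln (r k) / 2" for k t
  proof -
    have "cmod (cis t - of_real (r k) * a) ^ 2 = r k * h (r k) t"
    proof -
      have "r k * h (r k) t = 1 - 2 * r k * Re (w t) + r k ^2"
        using rpos[of k] by (simp add: h_def field_simps power2_eq_square)
      then show ?thesis using key[of t "r k"] by simp
    qed
    then have "2 * ln (cmod (cis t - of_real (r k) * a)) = ln (r k) + ln (h (r k) t)"
      using rpos[of k] hpos[of k t]
      by (metis ln_mult ln_realpow norm_ge_zero of_nat_numeral zero_less_mult_iff zero_less_power2 power2_eq_square)
    then show ?thesis by (simp add: f_def)
  qed
  have fint: "(f k has_integral (- pi * ln (r k))) {0..2*pi}" for k
  proof -
    have in1: "cmod (of_real (r k) * a) < 1" using rpos[of k] r1[of k] by (simp add: norm_mult a)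
    have c: "((\<lambda>t. ln (r k) / 2) has_integral (2*pi*(ln (r k) / 2))) {0..2*pi}"
      using has_integral_const_real[of "ln (r k) / 2" 0 "2*pi"] by simp
    have "((\<lambda>t. ln (cmod (cis t - of_real (r k) * a)) - ln (r k) / 2) has_integral (0 - 2*pi*(ln (r k) / 2))) {0..2*pi}"
      by (intro has_integral_diff jensen_in in1 c)
    then show ?thesis by (simp add: feq[abs_def])
  qed
  have fintS: "(f k has_integral (- pi * ln (r k))) S" for k
  proof -
    have "(f k has_integral (- pi * ln (r k))) {0..2*pi} \<longleftrightarrow> (f k has_integral (- pi * ln (r k))) S"
      by (rule has_integral_spike_set_eq; rule negligible_subset[OF negE]) (auto simp: S_def)
    then show ?thesis using fint by blast
  qed
  have dec: "f (Suc k) t \<le> f k t" for k t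
  proof -
    have "1 / r (Suc k) + r (Suc k) \<le> 1 / r k + r k"
    proof -
      have "1 / r k + r k - (1 / r (Suc k) + r (Suc k)) = (r (Suc k) - r k) * (1 - r k * r (Suc k)) / (r k * r (Suc k))"
        using rpos[of k] rpos[of "Suc k"] by (simp add: field_simps)
      also have "\<dots> \<ge> 0"
        using rpos[of k] rpos[of "Suc k"] r1[of k] r1[of "Suc k"] rmono[of k]
        by (intro divide_nonneg_pos mult_nonneg_nonneg)
           (auto simp: less_imp_le intro!: mult_le_one)
      finally show ?thesis by simp
    qed
    then have "h (r (Suc k)) t \<le> h (r k) t" by (simp add: h_def)
    then show ?thesis using hpos[of "Suc k" t] by (simp add: f_def)
  qed
  have conv: "(\<lambda>k. f k t) \<longlonglongrightarrow> ln (cmod (cis t - a))" if t: "t \<in> S" for t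
  proof -
    have ne: "cis t \<noteq> a" using t by (simp add: S_def E_def)
    have "(\<lambda>k. h (r k) t) \<longlonglongrightarrow> h 1 t" unfolding h_def
      by (intro tendsto_intros rlim) simp
    moreover have "h 1 t = cmod (cis t - a) ^ 2" using key[of t 1] by (simp add: h_def)
    moreover have "cmod (cis t - a) > 0" using ne by simp
    ultimately have "(\<lambda>k. ln (h (r k) t) / 2) \<longlonglongrightarrow> ln (cmod (cis t - a) ^ 2) / 2"
      by (intro tendsto_intros) auto
    moreover have "ln (cmod (cis t - a) ^ 2) / 2 = ln (cmod (cis t - a))"
      using \<open>cmod (cis t - a) > 0\<close> by (simp add: ln_realpow)
    ultimately show ?thesis by (simp add: f_def)
  qed
  have Ilim: "(\<lambda>k. integral S (f k)) \<longlonglongrightarrow> 0"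
  proof -
    have "(\<lambda>k. - pi * ln (r k)) \<longlonglongrightarrow> - pi * ln 1"
      by (intro tendsto_intros rlim) simp
    moreover have "integral S (f k) = - pi * ln (r k)" for k using fintS[of k] by (rule integral_unique)
    ultimately show ?thesis by simp
  qed
  have bnd: "bounded (range (\<lambda>k. integral S (f k)))"
    using convergent_imp_Bseq[of "\<lambda>k. integral S (f k)"] Ilim
    by (auto simp: Bseq_eq_bounded convergent_def)
  have mc: "(\<lambda>t. ln (cmod (cis t - a))) integrable_on S \<and>
        (\<lambda>k. integral S (f k)) \<longlonglongrightarrow> integral S (\<lambda>t. ln (cmod (cis t - a)))"
    by (rule monotone_convergence_decreasing) (use fintS dec conv bnd in auto)
  then have "integral S (\<lambda>t. ln (cmod (cis t - a))) = 0"
    using Ilim LIMSEQ_unique by blast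
  with mc have "((\<lambda>t. ln (cmod (cis t - a))) has_integral 0) S"
    by (metis integrable_integral)
  moreover have "((\<lambda>t. ln (cmod (cis t - a))) has_integral 0) S \<longleftrightarrow> ((\<lambda>t. ln (cmod (cis t - a))) has_integral 0) {0..2*pi}"
    by (rule has_integral_spike_set_eq; rule negligible_subset[OF negE]) (auto simp: S_def)
  ultimately show ?thesis by blast
qed

lemma jensen:
  "((\<lambda>t. ln (cmod (cis t - a))) has_integral (2*pi*ln (max 1 (cmod a)))) {0..2*pi}"
proof -
  consider "cmod a < 1" | "cmod a = 1" | "cmod a > 1" by linarith
  then show ?thesis
  proof cases
    case 1 then show ?thesis using jensen_in[of a] by simp
  next
    case 2 then show ?thesis using jensen_unit[of a] by simp
  next
    case 3 then show ?thesis using jensen_out[of a] by simp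
  qed
qed


lemma roots_unity_prod:
  fixes x :: complex
  assumes n: "n > 0"
  shows "x ^ n - 1 = (\<Prod>k<n. x - cis (2 * pi * real k / real n))"
proof -
  define \<zeta> where "\<zeta> = (\<lambda>k. cis (2 * pi * real k / real n))"
  define p :: "complex poly" where "p = monom 1 n - 1"
  define q :: "complex poly" where "q = (\<Prod>k<n. [:- \<zeta> k, 1:])"
  have degq: "degree q = n" unfolding q_def by (subst degree_prod_sum_eq) auto
  have lq: "lead_coeff q = 1" unfolding q_def by (simp add: lead_coeff_prod)
  have degp: "degree p \<le> n" unfolding p_def by (intro degree_diff_le) (auto simp: degree_monom_le)
  have lp: "coeff p n = 1" unfolding p_def using n by (simp add: coeff_monom)
  have "p - q = 0"
  proof (rule ccontr)
    assume d0: "p - q \<noteq> 0"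
    have "degree (p - q) \<le> n" using degp degq by (intro degree_diff_le) auto
    moreover have "coeff (p - q) n = 0" using lp lq degq by simp
    ultimately have "degree (p - q) < n" using d0
      by (metis le_neq_implies_less leading_coeff_0_iff)
    moreover have "\<zeta> ` {..<n} \<subseteq> {x. poly (p - q) x = 0}"
    proof
      fix y assume "y \<in> \<zeta> ` {..<n}"
      then obtain k where k: "k < n" "y = \<zeta> k" by auto
      have "y ^ n = 1" using k bij_betw_apply[OF Complex.bij_betw_roots_unity[OF n], of k] unfolding \<zeta>_def by simp
      moreover have "poly q y = 0" using k unfolding q_def by (auto simp: poly_prod)
      ultimately show "y \<in> {x. poly (p - q) x = 0}" by (simp add: p_def poly_monom)
    qed
    then have "card (\<zeta> ` {..<n}) \<le> card {x. poly (p - q) x = 0}"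
      by (rule card_mono[OF poly_roots_finite[OF d0]])
    moreover have "card (\<zeta> ` {..<n}) = n"
      using Complex.bij_betw_roots_unity[OF n] unfolding \<zeta>_def
      by (metis bij_betw_imp_inj_on card_image card_lessThan)
    ultimately show False using card_poly_roots_bound[OF d0] by linarith
  qed
  then have "poly p x = poly q x" by simp
  then show ?thesis by (simp add: p_def q_def poly_prod poly_monom \<zeta>_def)
qed

lemma sum_ident:
  fixes w :: complex
  assumes n: "n > 0"
  shows "of_nat n * w * (\<Sum>k = 0..n-1. of_real (1 / real (k + 1) * real ((n - 1) choose k)) * w ^ k)
         = (1 + w) ^ n - 1"
proof -
  have "of_nat n * w * (\<Sum>k = 0..n-1. of_real (1 / real (k + 1) * real ((n - 1) choose k)) * w ^ k)
      = (\<Sum>k<n. of_nat (n choose Suc k) * w ^ Suc k)"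
  proof -
    have "{0..n-1} = {..<n}" using n by auto
    moreover have "of_nat n * w * (of_real (1 / real (k + 1) * real ((n - 1) choose k)) * w ^ k)
           = of_nat (n choose Suc k) * w ^ Suc k" for k
    proof -
      have "real (Suc k * (n choose Suc k)) = real (n * ((n - 1) choose k))"
        by (simp only: binomial_absorption)
      then have "real n * (1 / real (k + 1) * real ((n - 1) choose k)) = real (n choose Suc k)"
        by (simp add: field_simps)
      then have "of_nat n * (of_real (1 / real (k + 1) * real ((n - 1) choose k)) :: complex)
                 = of_nat (n choose Suc k)"
        by (metis of_real_mult of_real_of_nat_eq)
      moreover have "of_nat n * w * (C * w^k) = (of_nat n * C) * (w * w^k)" for C :: complex
        by (simp add: mult_ac)
      ultimately show ?thesis by (simp only: power_Suc)
    qed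
    ultimately show ?thesis by (simp add: sum_distrib_left)
  qed
  also have "\<dots> = (1 + w) ^ n - 1"
  proof -
    have "(1 + w) ^ n = (w + 1) ^ n" by (simp add: add.commute)
    also have "\<dots> = (\<Sum>j\<le>n. of_nat (n choose j) * w ^ j)"
      by (simp add: binomial_ring)
    also have "\<dots> = 1 + (\<Sum>k<n. of_nat (n choose Suc k) * w ^ Suc k)"
      by (subst sum.atMost_shift) simp
    finally show ?thesis by simp
  qed
  finally show ?thesis .
qed

lemma poly_ident:
  fixes w :: complex
  assumes n: "n > 0" and w: "w \<noteq> 0"
  shows "(\<Sum>k = 0..n-1. of_real (1 / real (k + 1) * real ((n - 1) choose k)) * w ^ k)
         = (1 / of_nat n) * (\<Prod>k\<in>{1..n-1}. w - (cis (2 * pi * real k / real n) - 1))"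
proof -
  have "(1 + w) ^ n - 1 = (\<Prod>k<n. (1 + w) - cis (2 * pi * real k / real n))"
    by (rule roots_unity_prod[OF n])
  also have "{..<n} = insert 0 {1..n-1}" using n by auto
  also have "(\<Prod>k\<in>insert 0 {1..n-1}. (1 + w) - cis (2 * pi * real k / real n))
      = w * (\<Prod>k\<in>{1..n-1}. w - (cis (2 * pi * real k / real n) - 1))"
    by (subst prod.insert) (auto simp: algebra_simps)
  finally have "of_nat n * w * (\<Sum>k = 0..n-1. of_real (1 / real (k + 1) * real ((n - 1) choose k)) * w ^ k)
      = w * (\<Prod>k\<in>{1..n-1}. w - (cis (2 * pi * real k / real n) - 1))"
    using sum_ident[OF n, of w] by simp
  then show ?thesis using n w by (simp add: field_simps)
qed

lemma cmod_cis_minus_1: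
  assumes "sin x \<ge> 0"
  shows "cmod (cis (2 * x) - 1) = 2 * sin x"
proof -
  have "cmod (cis (2 * x) - 1) ^ 2 = (cos (2*x) - 1)^2 + sin (2*x) ^ 2"
    by (simp add: cmod_power2)
  also have "\<dots> = 2 - 2 * cos (2 * x)"
    using sin_cos_squared_add[of "2*x"] by (simp add: power2_eq_square algebra_simps)
  also have "\<dots> = (2 * sin x) ^ 2" by (simp add: cos_double_sin power2_eq_square)
  finally have "cmod (cis (2 * x) - 1) ^ 2 = (2 * sin x) ^ 2" .
  then show ?thesis by (rule power2_eq_imp_eq) (use assms in auto)
qed


theorem lemma4p2:
  fixes n :: nat and \<rho> m :: real
  assumes "n \<ge> 2" and "\<rho> > 0"
  shows "mahler_measure
           (\<lambda>z. \<Sum>k = 0..n-1. of_real (1 / real (k + 1) * real ((n - 1) choose k))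
                                 * (z * of_real (\<rho> powr (1 - m))) ^ k)
         = 1 / real n * \<rho> powr ((1 - m) * real (n - 1)) *
           (\<Prod>k \<in> {k. 1 \<le> k \<and> k \<le> n - 1 \<and>
                         \<rho> powr (m - 1) * (2 * sin (pi * real k / real n)) \<ge> 1}.
              \<rho> powr (m - 1) * (2 * sin (pi * real k / real n)))"
proof -
  have n0: "n > 0" using assms(1) by simp
  define c where "c = \<rho> powr (1 - m)"
  have c0: "c > 0" unfolding c_def using assms(2) by simp
  define \<zeta> where "\<zeta> = (\<lambda>k. cis (2 * pi * real k / real n))"
  define K where "K = {1..n-1}"
  define z where "z = (\<lambda>k. (\<zeta> k - 1) / of_real c)"
  define x where "x = (\<lambda>k. \<rho> powr (m - 1) * (2 * sin (pi * real k / real n)))"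
  define P where "P = (\<lambda>y::complex. \<Sum>k = 0..n-1. of_real (1 / real (k + 1) * real ((n - 1) choose k))
                                 * (y * of_real c) ^ k)"
  have finK: "finite K" and cardK: "card K = n - 1" by (auto simp: K_def)
  have ic: "\<rho> powr (m - 1) = 1 / c"
    unfolding c_def using assms(2) by (simp add: powr_minus_divide[symmetric])
  have zx: "cmod (z k) = x k" if "k \<in> K" for k
  proof -
    have "sin (pi * real k / real n) \<ge> 0"
      using that n0 by (intro sin_ge_zero) (auto simp: K_def field_simps)
    moreover have "2 * pi * real k / real n = 2 * (pi * real k / real n)" by simp
    ultimately have "cmod (\<zeta> k - 1) = 2 * sin (pi * real k / real n)"
      unfolding \<zeta>_def using cmod_cis_minus_1 by metis
    then show ?thesis using c0 by (simp add: z_def x_def ic norm_divide)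
  qed
  define E where "E = (\<Union>k\<in>K. {t. cis t = z k})"
  have negE: "negligible E"
    unfolding E_def by (intro countable_negligible countable_UN countable_cis_eq) (simp add: finK countable_finite)
  define g where "g = (\<lambda>t. ln (1 / real n) + real (n - 1) * ln c + (\<Sum>k\<in>K. ln (cmod (cis t - z k))))"
  have Pg: "ln (cmod (P (cis t))) = g t" if "t \<notin> E" for t
  proof -
    define w where "w = cis t * of_real c"
    have w0: "w \<noteq> 0" using c0 by (simp add: w_def)
    have "P (cis t) = (1 / of_nat n) * (\<Prod>k\<in>K. w - (\<zeta> k - 1))"
      unfolding P_def K_def \<zeta>_def w_def by (rule poly_ident[OF n0 w0[unfolded w_def]])
    also have "(\<Prod>k\<in>K. w - (\<zeta> k - 1)) = (\<Prod>k\<in>K. of_real c * (cis t - z k))"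
      by (rule prod.cong) (use c0 in \<open>auto simp: w_def z_def field_simps\<close>)
    also have "\<dots> = of_real c ^ (n - 1) * (\<Prod>k\<in>K. cis t - z k)"
      by (simp add: prod.distrib cardK)
    finally have "cmod (P (cis t)) = (1 / real n) * (c ^ (n - 1) * (\<Prod>k\<in>K. cmod (cis t - z k)))"
      using c0 by (simp add: norm_mult norm_divide norm_power prod_norm)
    moreover have nz: "cmod (cis t - z k) \<noteq> 0" if "k \<in> K" for k
      using \<open>t \<notin> E\<close> that by (auto simp: E_def)
    have pp: "(\<Prod>k\<in>K. cmod (cis t - z k)) > 0"
      using nz by (intro prod_pos) auto
    have "ln ((1 / real n) * (c ^ (n - 1) * (\<Prod>k\<in>K. cmod (cis t - z k))))
        = ln (1 / real n) + (ln (c ^ (n - 1)) + ln (\<Prod>k\<in>K. cmod (cis t - z k)))"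
    proof -
      have a1: "1 / real n > 0" using n0 by simp
      have a2: "c ^ (n - 1) > 0" using c0 by simp
      show ?thesis by (subst ln_mult_pos[OF a1 mult_pos_pos[OF a2 pp]], subst ln_mult_pos[OF a2 pp]) (rule refl)
    qed
    also have "ln (c ^ (n - 1)) = real (n - 1) * ln c" using c0 by (simp add: ln_realpow)
    also have "ln (\<Prod>k\<in>K. cmod (cis t - z k)) = (\<Sum>k\<in>K. ln (cmod (cis t - z k)))"
      using nz finK by (simp add: ln_prod)
    finally show ?thesis using \<open>cmod (P (cis t)) = _\<close> by (simp add: g_def add.assoc)
  qed
  define V where "V = 2 * pi * (ln (1 / real n) + real (n - 1) * ln c) + (\<Sum>k\<in>K. 2 * pi * ln (max 1 (cmod (z k))))"
  have gint: "(g has_integral V) {0..2*pi}"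
  proof -
    have c: "((\<lambda>t. ln (1 / real n) + real (n - 1) * ln c) has_integral (2 * pi * (ln (1 / real n) + real (n - 1) * ln c))) {0..2*pi}"
      using has_integral_const_real[of "ln (1 / real n) + real (n - 1) * ln c" 0 "2*pi"] by simp
    show ?thesis unfolding g_def V_def
      by (intro has_integral_add[OF c] has_integral_sum finK jensen)
  qed
  have Pint: "((\<lambda>t. ln (cmod (P (cis t)))) has_integral V) {0..2*pi}"
    using gint has_integral_spike_eq[OF negE, of "{0..2*pi}" "\<lambda>t. ln (cmod (P (cis t)))" g V] Pg by auto
  have "mahler_measure P = exp (V / (2 * pi))"
    unfolding mahler_measure_def using integral_unique[OF Pint] by simp
  also have "V / (2 * pi) = ln (1 / real n) + real (n - 1) * ln c + (\<Sum>k\<in>K. ln (max 1 (x k)))"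
    by (simp add: V_def zx sum_divide_distrib[symmetric] field_simps sum_distrib_left)
  also have "exp \<dots> = 1 / real n * c ^ (n - 1) * (\<Prod>k\<in>K. max 1 (x k))"
  proof -
    have ec: "exp (real (n - 1) * ln c) = c ^ (n - 1)" using c0 by (simp add: ln_realpow[symmetric])
    have em: "exp (ln (max 1 (x k))) = max 1 (x k)" for k by simp
    have es: "exp (\<Sum>k\<in>K. ln (max 1 (x k))) = (\<Prod>k\<in>K. max 1 (x k))"
      using finK by (simp add: exp_sum)
    have e1: "exp (ln (1 / real n)) = 1 / real n" using n0 by simp
    show ?thesis by (simp only: exp_add ec es e1)
  qed
  also have "c ^ (n - 1) = \<rho> powr ((1 - m) * real (n - 1))"
    unfolding c_def using assms(2) by (simp add: powr_power mult_ac)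
  also have "(\<Prod>k\<in>K. max 1 (x k)) = (\<Prod>k\<in>{k\<in>K. x k \<ge> 1}. max 1 (x k))"
    by (rule prod.mono_neutral_right) (auto simp: finK)
  also have "\<dots> = (\<Prod>k\<in>{k\<in>K. x k \<ge> 1}. x k)"
    by (rule prod.cong) auto
  also have "{k\<in>K. x k \<ge> 1} = {k. 1 \<le> k \<and> k \<le> n - 1 \<and> \<rho> powr (m - 1) * (2 * sin (pi * real k / real n)) \<ge> 1}"
    by (auto simp: K_def x_def)
  finally show ?thesis unfolding P_def c_def x_def .
qed

end
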